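(* Let $N\geq 1$ be an integer. Then for all $0<|x|<\pi/2$, \[ a_N x^{2N+2}<2\left(\frac{x}{\sin x}\right)+\frac{x}{\tan x}-\left(3+\sum_{j=2}^{N}\frac{(2^{2j}-4)|B_{2j}|}{(2j)!}x^{2j}\right)<b_N x^{2N+2}, \] with the best possible constants \[ a_N=\frac{(2^{2N+2}-4)|B_{2N+2}|}{(2N+2)!}, \] \[ b_N=\frac{8}{\pi^{2N+2}}\left(\sum_{k=1}^{\infty}\frac{(-1)^{k+1}}{k^{2N}(2k-1)}-\sum_{k=1}^{\infty}\frac{(-1)^{k+1}}{k^{2N}(2k+1)}\right)-\frac{4}{\pi^{2N+2}}\left(\sum_{k=1}^{\infty}\frac{1}{k^{2N}(2k-1)}-\sum_{k=1}^{\infty}\frac{1}{k^{2N}(2k+1)}\right). \]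
   Context: The Bernoulli numbers $B_n$ are defined by $\frac{t}{e^t-1}=\sum_{n=0}^\infty B_n\frac{t^n}{n!}$ for $|t|<2\pi$. An empty sum is understood to be zero. *)

theory Defs
  imports "HOL-Analysis.Analysis"
begin

text \<open>Bernoulli numbers, defined (as in the paper) by the generating function
  t/(e^t - 1) = sum_n B_n t^n / n!  for 0 < |t| < 2 pi
  (the point t = 0 is excluded since the left side is a removable singularity there).\<close>
definition bernoulli_num :: "nat \<Rightarrow> real" where
  "bernoulli_num = (THE B. \<forall>t::real. 0 < \<bar>t\<bar> \<and> \<bar>t\<bar> < 2 * pi \<longrightarrow>
       (\<lambda>n. B n * t ^ n / fact n) sums (t / (exp t - 1)))"

end

theory Submission
  imports Defs
begin

lemma digamma_refl:
  fixes z :: complex assumes z: "z \<notin> \<int>"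
  shows "of_real pi * cot (of_real pi * z) = Digamma (1 - z) - Digamma z"
proof -
  have z1: "z \<notin> \<int>\<^sub>\<le>\<^sub>0" using z nonpos_Ints_subset_Ints by blast
  have "1 - z \<notin> \<int>" using z Ints_diff[of 1 "1-z"] by auto
  hence z2: "1 - z \<notin> \<int>\<^sub>\<le>\<^sub>0" using nonpos_Ints_subset_Ints by blast
  have sn: "sin (of_real pi * z) \<noteq> 0"
  proof
    assume "sin (of_real pi * z) = 0"
    then obtain n :: int where "of_real pi * z = of_real (of_int n * pi)" by (auto simp: sin_eq_0)
    hence "z = of_int n" by (simp add: field_simps)
    thus False using z by auto
  qed
  have D1: "((\<lambda>w. Gamma w * Gamma (1 - w)) has_field_derivative
        (Gamma z * Digamma z * Gamma (1 - z) - Gamma z * (Gamma (1 - z) * Digamma (1 - z)))) (at z)"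
    using z1 z2 by (auto intro!: derivative_eq_intros)
  have D2: "((\<lambda>w. of_real pi / sin (of_real pi * w)) has_field_derivative
        (- of_real pi * (of_real pi * cos (of_real pi * z)) / (sin (of_real pi * z))^2)) (at z)"
    using sn by (auto intro!: derivative_eq_intros simp: power2_eq_square field_simps)
  have fe: "(\<lambda>w::complex. Gamma w * Gamma (1 - w)) = (\<lambda>w::complex. of_real pi / sin (of_real pi * w))"
    by (intro ext Gamma_reflection_complex)
  have eq: "Gamma z * Digamma z * Gamma (1 - z) - Gamma z * (Gamma (1 - z) * Digamma (1 - z))
      = - of_real pi * (of_real pi * cos (of_real pi * z)) / (sin (of_real pi * z))^2"
    using DERIV_unique[OF D1 D2[folded fe]] .
  have G: "Gamma z * Gamma (1 - z) = of_real pi / sin (of_real pi * z)"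
    using Gamma_reflection_complex by auto
  have "(Gamma z * Gamma (1 - z)) * (Digamma z - Digamma (1 - z))
      = (of_real pi / sin (of_real pi * z)) * (- of_real pi * cot (of_real pi * z))"
    using eq sn by (simp add: cot_def power2_eq_square field_simps)
  hence "(of_real pi / sin (of_real pi * z)) * (Digamma z - Digamma (1 - z))
      = (of_real pi / sin (of_real pi * z)) * (- of_real pi * cot (of_real pi * z))"
    using G by simp
  moreover have "of_real pi / sin (of_real pi * z) \<noteq> 0" using sn by simp
  ultimately have "Digamma z - Digamma (1 - z) = - of_real pi * cot (of_real pi * z)" by (metis mult_left_cancel)
  thus ?thesis by (simp add: algebra_simps)
qed

lemma cot_pfd:
  fixes z :: complex assumes z: "z \<notin> \<int>"
  shows "(\<lambda>m. 2 * z / (z^2 - (of_nat (Suc m))^2)) sums (of_real pi * cot (of_real pi * z) - 1 / z)"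
proof -
  have z0: "z \<noteq> 0" using z by auto
  have z1: "1 - z \<noteq> 0" using z by (metis Ints_1 eq_iff_diff_eq_0)
  have S1: "(\<lambda>k. inverse (of_nat (Suc k)) - inverse ((1 - z) + of_nat k)) sums (Digamma (1 - z) + euler_mascheroni)"
    using summable_Digamma[OF z1] by (simp add: Digamma_def summable_sums)
  have S2: "(\<lambda>k. inverse (of_nat (Suc k)) - inverse (z + of_nat k)) sums (Digamma z + euler_mascheroni)"
    using summable_Digamma[OF z0] by (simp add: Digamma_def summable_sums)
  have D: "(\<lambda>k. inverse (z + of_nat k) - inverse ((1 - z) + of_nat k)) sums (Digamma (1 - z) - Digamma z)"
    using sums_diff[OF S1 S2] by simp
  have lim: "(\<lambda>n. inverse (z + of_nat n)) \<longlonglongrightarrow> 0"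
    by (intro filterlim_compose[OF tendsto_inverse_0]
              tendsto_add_filterlim_at_infinity[OF tendsto_const] tendsto_of_nat)
  have T: "(\<lambda>k. inverse (z + of_nat k) - inverse (z + of_nat (Suc k))) sums (inverse z)"
    using telescope_sums'[OF lim] by simp
  have D2: "(\<lambda>k. inverse (z + of_nat (Suc k)) - inverse ((1 - z) + of_nat k)) sums (Digamma (1 - z) - Digamma z - inverse z)"
    using sums_diff[OF D T] by simp
  have eqt: "inverse (z + of_nat (Suc k)) - inverse ((1 - z) + of_nat k) = 2 * z / (z^2 - (of_nat (Suc k))^2)" for k
  proof -
    have a: "z + of_nat (Suc k) \<noteq> 0"
    proof
      assume "z + of_nat (Suc k) = 0"
      hence "z = - of_nat (Suc k)" by (simp add: algebra_simps eq_neg_iff_add_eq_0 flip: of_nat_Suc)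
      thus False using z by (metis Ints_minus Ints_of_nat)
    qed
    have b: "(1 - z) + of_nat k \<noteq> 0"
    proof
      assume "(1 - z) + of_nat k = 0"
      hence "z = of_nat (Suc k)" by (simp add: algebra_simps)
      thus False using z by (metis Ints_of_nat)
    qed
    have c: "z^2 - (of_nat (Suc k))^2 = (z + of_nat (Suc k)) * (- ((1 - z) + of_nat k))"
      by (simp add: power2_eq_square algebra_simps)
    have "inverse (z + of_nat (Suc k)) - inverse ((1 - z) + of_nat k)
        = (((1 - z) + of_nat k) - (z + of_nat (Suc k))) / ((z + of_nat (Suc k)) * ((1 - z) + of_nat k))"
      using a b by (simp add: field_simps)
    also have "((1 - z) + of_nat k) - (z + of_nat (Suc k)) = - (2 * z)" by simp
    also have "(z + of_nat (Suc k)) * ((1 - z) + of_nat k) = - (z^2 - (of_nat (Suc k))^2)"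
      by (simp add: power2_eq_square algebra_simps)
    finally show ?thesis by (metis minus_diff_eq divide_minus_right minus_divide_left)
  qed
  show ?thesis using D2 digamma_refl[OF z] unfolding eqt by (simp add: divide_inverse)
qed

lemma cot_pfd_real:
  fixes x :: real assumes x0: "x \<noteq> 0" and xp: "\<bar>x\<bar> < pi"
  shows "(\<lambda>m. 2 * x^2 / (x^2 - (real (Suc m) * pi)^2)) sums (x * cot x - 1)"
proof -
  define z where "z = complex_of_real (x / pi)"
  have zI: "z \<notin> \<int>"
  proof
    assume "z \<in> \<int>"
    then obtain i :: int where i: "x / pi = of_int i" by (auto simp: complex_is_Int_iff z_def)
    have "\<bar>x / pi\<bar> < 1" using xp pi_gt_zero by (simp add: abs_divide)
    hence "\<bar>of_int i :: real\<bar> < 1" using i by simp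
    hence "i = 0" by linarith
    thus False using i x0 by simp
  qed
  have S: "(\<lambda>m. z * (2 * z / (z^2 - (of_nat (Suc m))^2))) sums (z * (of_real pi * cot (of_real pi * z) - 1 / z))"
    using sums_mult[OF cot_pfd[OF zI], of z] .
  have t: "z * (2 * z / (z^2 - (of_nat (Suc m))^2)) = of_real (2 * x^2 / (x^2 - (real (Suc m) * pi)^2))" for m
  proof -
    have "z * (2 * z / (z^2 - (of_nat (Suc m))^2)) = of_real ((x/pi) * (2 * (x/pi) / ((x/pi)^2 - (real (Suc m))^2)))"
      by (simp add: z_def)
    also have "(x/pi) * (2 * (x/pi) / ((x/pi)^2 - (real (Suc m))^2)) = 2 * x^2 / (x^2 - (real (Suc m) * pi)^2)"
      using pi_gt_zero by (simp add: field_simps power2_eq_square)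
    finally show ?thesis .
  qed
  have sm: "z * (of_real pi * cot (of_real pi * z) - 1 / z) = of_real (x * cot x - 1)"
  proof -
    have zz: "z \<noteq> 0" using x0 by (simp add: z_def)
    have "of_real pi * z = of_real x" using pi_gt_zero by (simp add: z_def)
    hence "cot (of_real pi * z) = of_real (cot x)" by (simp add: cot_of_real)
    hence "z * (of_real pi * cot (of_real pi * z) - 1 / z) = of_real pi * z * of_real (cot x) - 1"
      using zz by (simp add: field_simps)
    also have "\<dots> = of_real (x * cot x - 1)" using \<open>of_real pi * z = of_real x\<close> by simp
    finally show ?thesis .
  qed
  show ?thesis using S unfolding t sm sums_of_real_iff .
qed

lemma coth_pfd:
  fixes t :: real assumes t0: "t \<noteq> 0"
  shows "(\<lambda>m. 2 * (t/(2*pi))^2 / ((t/(2*pi))^2 + (real (Suc m))^2)) sums (t / (exp t - 1) - 1 + t / 2)"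
proof -
  define s where "s = t / (2*pi)"
  define w where "w = t / 2"
  define z where "z = \<i> * complex_of_real s"
  have s0: "s \<noteq> 0" using t0 by (simp add: s_def)
  have zI: "z \<notin> \<int>" using s0 by (auto simp: complex_is_Int_iff z_def)
  have S: "(\<lambda>m. z * (2 * z / (z^2 - (of_nat (Suc m))^2))) sums (z * (of_real pi * cot (of_real pi * z) - 1 / z))"
    using sums_mult[OF cot_pfd[OF zI], of z] .
  have t: "z * (2 * z / (z^2 - (of_nat (Suc m))^2)) = of_real (2 * s^2 / (s^2 + (real (Suc m))^2))" for m
  proof -
    have "z * (2 * z / (z^2 - (of_nat (Suc m))^2)) = (- (2 * (of_real s)^2)) / (- ((of_real s)^2 + (of_nat (Suc m))^2))"
      by (simp add: z_def power2_eq_square algebra_simps)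
    also have "\<dots> = 2 * (of_real s)^2 / ((of_real s)^2 + (of_nat (Suc m))^2)"
      by (rule minus_divide_divide)
    also have "\<dots> = of_real (2 * s^2 / (s^2 + (real (Suc m))^2))" by simp
    finally show ?thesis .
  qed
  define E where "E = exp w"
  have E0: "E > 0" by (simp add: E_def)
  have E1: "E \<noteq> 1" using t0 by (simp add: E_def w_def)
  have EE: "E * E = exp t" by (simp add: E_def w_def flip: exp_add)
  have pz: "of_real pi * z = \<i> * of_real w" using pi_gt_zero by (simp add: z_def s_def w_def)
  have cs: "cos (\<i> * complex_of_real w) = of_real ((E + inverse E) / 2)"
    by (simp add: cos_i_times exp_of_real E_def)
  have sn: "sin (\<i> * complex_of_real w) = \<i> * of_real ((E - inverse E) / 2)"
    by (simp add: sin_i_times exp_of_real E_def)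
  have EE1: "E * E \<noteq> 1"
  proof
    assume "E * E = 1"
    hence "(E - 1) * (E + 1) = 0" by (simp add: algebra_simps)
    thus False using E0 E1 by simp
  qed
  have Ene: "E - inverse E \<noteq> 0" using E0 EE1 by (auto simp: field_simps)
  have zz: "z \<noteq> 0" using s0 by (simp add: z_def)
  have "z * (of_real pi * cot (of_real pi * z) - 1 / z) = (of_real pi * z) * cot (of_real pi * z) - 1"
    using zz by (simp add: field_simps)
  also have "\<dots> = \<i> * of_real w * (of_real ((E + inverse E) / 2) / (\<i> * of_real ((E - inverse E) / 2))) - 1"
    unfolding pz cot_def cs sn ..
  also have "\<dots> = of_real w * of_real ((E + inverse E) / 2) / of_real ((E - inverse E) / 2) - 1"
  proof -
    have nz: "(of_real ((E - inverse E) / 2) :: complex) \<noteq> 0" using Ene by (simp only: of_real_eq_0_iff) simp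
    have gen: "\<And>(a::complex) b c. b \<noteq> 0 \<Longrightarrow> \<i> * c * (a / (\<i> * b)) - 1 = c * a / b - 1"
      by (simp add: field_simps)
    show ?thesis by (rule gen[OF nz])
  qed
  also have "\<dots> = of_real (w * ((E + inverse E) / 2) / ((E - inverse E) / 2) - 1)" by simp
  also have "w * ((E + inverse E) / 2) / ((E - inverse E) / 2) = w * (E + inverse E) / (E - inverse E)"
    using Ene by (simp add: field_simps)
  also have "w * (E + inverse E) / (E - inverse E) - 1 = t / (exp t - 1) - 1 + t / 2"
  proof -
    have "w * (E + inverse E) / (E - inverse E) = w * (E * E + 1) / (E * E - 1)"
      using E0 EE1 by (simp add: field_simps)
    also have "\<dots> = t / (exp t - 1) + t / 2"
      unfolding EE using E0 EE1 EE[symmetric] by (simp add: w_def field_simps)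
    finally show ?thesis by simp
  qed
  finally have sm: "z * (of_real pi * cot (of_real pi * z) - 1 / z) = of_real (t / (exp t - 1) - 1 + t / 2)" .
  show ?thesis using S unfolding t sm sums_of_real_iff s_def .
qed

lemma infsum_eq_suminf_abs:
  fixes f :: "nat \<Rightarrow> real"
  assumes "summable (\<lambda>n. \<bar>f n\<bar>)"
  shows "infsum f UNIV = suminf f"
proof -
  have "summable f" using assms summable_norm_cancel[of f] by simp
  hence "f sums suminf f" by (simp add: summable_sums)
  hence "(f has_sum suminf f) UNIV" using norm_summable_imp_has_sum[of f] assms by simp
  thus ?thesis by (rule infsumI)
qed

lemma swap_sums:
  fixes g :: "nat \<Rightarrow> nat \<Rightarrow> real"
  assumes r: "\<And>m. summable (\<lambda>n. \<bar>g m n\<bar>)" and c: "summable (\<lambda>m. \<Sum>n. \<bar>g m n\<bar>)"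
  shows "(\<lambda>n. \<Sum>m. g m n) sums (\<Sum>m. \<Sum>n. g m n)"
proof -
  have rn: "infsum (\<lambda>n. norm (g m n)) UNIV = (\<Sum>n. \<bar>g m n\<bar>)" for m
    using infsum_eq_suminf_abs[of "\<lambda>n. norm (g m n)"] r[of m] by simp
  have abs: "Infinite_Sum.abs_summable_on (\<lambda>(m,n). g m n) (UNIV \<times> UNIV)"
  proof (rule Infinite_Sum.abs_summable_on_Sigma_iff[where f="\<lambda>(m,n). g m n" and A=UNIV and B="\<lambda>_. UNIV", THEN iffD2], intro conjI ballI)
    fix m :: nat
    show "Infinite_Sum.abs_summable_on (\<lambda>y. (\<lambda>(m, n). g m n) (m, y)) UNIV"
      using norm_summable_imp_summable_on[of "\<lambda>n. norm (g m n)"] r[of m] by simp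
  next
    show "Infinite_Sum.abs_summable_on (\<lambda>x. \<Sum>\<^sub>\<infinity>y\<in>UNIV. norm ((\<lambda>(m, n). g m n) (x, y))) UNIV" (is ?thesis)
    proof -
      have nn: "\<bar>\<Sum>n. \<bar>g m n\<bar>\<bar> = (\<Sum>n. \<bar>g m n\<bar>)" for m
        using suminf_nonneg[OF r[of m]] by simp
      show ?thesis
      using norm_summable_imp_summable_on[of "\<lambda>m. norm (\<Sum>n. \<bar>g m n\<bar>)"] c rn nn by simp
    qed
  qed
  hence S: "(\<lambda>(m,n). g m n) summable_on (UNIV \<times> UNIV)"
    using summable_on_iff_abs_summable_on_real by blast
  have S': "(\<lambda>(n,m). g m n) summable_on (UNIV \<times> UNIV)"
    using S summable_on_swap[of "\<lambda>(m,n). g m n" UNIV UNIV] by (simp add: case_prod_unfold)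
  have col: "summable (\<lambda>m. \<bar>g m n\<bar>)" for n
  proof (rule summable_comparison_test'[OF c])
    fix m :: nat assume "m \<ge> 0"
    have "\<bar>g m n\<bar> \<le> (\<Sum>n. \<bar>g m n\<bar>)"
      using sum_le_suminf[OF r[of m], of "{n}"] by simp
    thus "norm \<bar>g m n\<bar> \<le> (\<Sum>n. \<bar>g m n\<bar>)" by simp
  qed
  have rowb: "summable (\<lambda>m. \<bar>\<Sum>n. g m n\<bar>)"
  proof (rule summable_comparison_test'[OF c])
    fix m :: nat assume "m \<ge> 0"
    show "norm \<bar>\<Sum>n. g m n\<bar> \<le> (\<Sum>n. \<bar>g m n\<bar>)"
      using summable_rabs[OF r[of m]] by simp
  qed
  have colsum: "(\<lambda>n. infsum (\<lambda>m. g m n) UNIV) summable_on UNIV"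
    using summable_on_Sigma_banach[of "\<lambda>n m. g m n" UNIV "\<lambda>_. UNIV"] S' by simp
  have ci: "infsum (\<lambda>m. g m n) UNIV = (\<Sum>m. g m n)" for n
    using infsum_eq_suminf_abs[OF col] .
  have ri: "infsum (\<lambda>n. g m n) UNIV = (\<Sum>n. g m n)" for m
    using infsum_eq_suminf_abs[OF r] .
  have sw: "infsum (\<lambda>m. infsum (\<lambda>n. g m n) UNIV) UNIV = infsum (\<lambda>n. infsum (\<lambda>m. g m n) UNIV) UNIV"
    using infsum_swap_banach[of g UNIV UNIV] S by simp
  have "((\<lambda>n. \<Sum>m. g m n) has_sum infsum (\<lambda>n. \<Sum>m. g m n) UNIV) UNIV"
    using colsum unfolding ci by (simp add: summable_iff_has_sum_infsum)
  hence "(\<lambda>n. \<Sum>m. g m n) sums infsum (\<lambda>n. \<Sum>m. g m n) UNIV" by (rule has_sum_imp_sums)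
  also have "infsum (\<lambda>n. \<Sum>m. g m n) UNIV = (\<Sum>m. \<Sum>n. g m n)"
    using sw unfolding ci ri using infsum_eq_suminf_abs[OF rowb] by simp
  finally show ?thesis .
qed

definition zeta2 :: "nat \<Rightarrow> real" where "zeta2 n = (\<Sum>k. 1 / real (Suc k) ^ n)"

lemma summable_zeta2: "n \<ge> 2 \<Longrightarrow> summable (\<lambda>k. 1 / real (Suc k) ^ n)"
  using inverse_power_summable[of n, where 'a=real] summable_Suc_iff[of "\<lambda>k. inverse (real k ^ n)"]
  by (simp add: divide_inverse)

lemma zeta2_sums: "n \<ge> 2 \<Longrightarrow> (\<lambda>k. 1 / real (Suc k) ^ n) sums zeta2 n"
  unfolding zeta2_def using summable_zeta2 by (simp add: summable_sums)

lemma zeta2_pos: "n \<ge> 2 \<Longrightarrow> zeta2 n > 0"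
  unfolding zeta2_def
  by (rule suminf_pos[OF summable_zeta2]) auto

definition bern :: "nat \<Rightarrow> real" where
  "bern n = (if n = 0 then 1 else if n = 1 then -1/2 else if odd n then 0
     else (-1)^(n div 2 + 1) * 2 * fact n * zeta2 n / (2*pi)^n)"

lemma bern_even_series:
  fixes t :: real assumes t0: "t \<noteq> 0" and t1: "\<bar>t\<bar> < 2*pi"
  shows "(\<lambda>n. 2 * (-1)^n * (t/(2*pi))^(2*n+2) * zeta2 (2*n+2)) sums (t / (exp t - 1) - 1 + t / 2)"
proof -
  define s where "s = t/(2*pi)"
  have s0: "s \<noteq> 0" using t0 by (simp add: s_def)
  have s1: "s^2 < 1"
  proof -
    have "\<bar>s\<bar> < 1" using t1 pi_gt_zero by (simp add: s_def abs_divide)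
    thus ?thesis by (metis abs_square_less_1)
  qed
  define u where "u m = s^2 / real (Suc m)^2" for m
  have u0: "0 < u m" for m using s0 by (simp add: u_def)
  have u1: "u m \<le> s^2" for m
  proof -
    have "real (Suc m)^2 \<ge> 1" by simp
    thus ?thesis unfolding u_def using s0 by (simp add: divide_le_eq mult_le_cancel_left1)
  qed
  have u1': "u m < 1" for m using u1[of m] s1 by linarith
  define g where "g m n = 2 * (-1)^n * (u m)^(Suc n)" for m n
  have rowabs: "(\<lambda>n. \<bar>g m n\<bar>) sums (2 * u m / (1 - u m))" for m
  proof -
    have "(\<lambda>n. (u m)^n) sums (1 / (1 - u m))" using geometric_sums[of "u m"] u0[of m] u1'[of m] by simp
    from sums_mult[OF this, of "2 * u m"]
    have "(\<lambda>n. 2 * u m * (u m)^n) sums (2 * u m * (1 / (1 - u m)))" .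
    moreover have "(\<lambda>n. 2 * u m * (u m)^n) = (\<lambda>n. \<bar>g m n\<bar>)"
      using u0[of m] by (auto simp: g_def abs_mult power_abs)
    ultimately show ?thesis by simp
  qed
  have row: "(\<lambda>n. g m n) sums (2 * s^2 / (s^2 + (real (Suc m))^2))" for m
  proof -
    have "(\<lambda>n. (- u m)^n) sums (1 / (1 - (- u m)))" using geometric_sums[of "- u m"] u0[of m] u1'[of m] by simp
    from sums_mult[OF this, of "2 * u m"]
    have "(\<lambda>n. 2 * u m * (- u m)^n) sums (2 * u m * (1 / (1 - (- u m))))" .
    moreover have "(\<lambda>n. 2 * u m * (- u m)^n) = (\<lambda>n. g m n)"
      by (auto simp: g_def power_minus[of "u m"] mult_ac)
    ultimately have "(\<lambda>n. g m n) sums (2 * u m / (1 + u m))" by simp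
    also have "2 * u m / (1 + u m) = 2 * s^2 / (s^2 + (real (Suc m))^2)"
      unfolding u_def by (simp add: field_simps)
    finally show ?thesis .
  qed
  have c: "summable (\<lambda>m. \<Sum>n. \<bar>g m n\<bar>)"
  proof (rule summable_comparison_test')
    show "summable (\<lambda>m. (2 * s^2 / (1 - s^2)) * (1 / real (Suc m)^2))"
      using summable_zeta2[of 2] by (intro summable_mult) simp
  next
    fix m :: nat assume "m \<ge> 0"
    have "(\<Sum>n. \<bar>g m n\<bar>) = 2 * u m / (1 - u m)" using rowabs[of m] by (simp add: sums_iff)
    also have "\<dots> \<le> 2 * u m / (1 - s^2)"
      using u0[of m] u1[of m] s1 by (intro divide_left_mono mult_pos_pos) auto
    also have "\<dots> = (2 * s^2 / (1 - s^2)) * (1 / real (Suc m)^2)" by (simp add: u_def)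
    finally show "norm (\<Sum>n. \<bar>g m n\<bar>) \<le> (2 * s^2 / (1 - s^2)) * (1 / real (Suc m)^2)"
      using suminf_nonneg[OF sums_summable[OF rowabs[of m]]] by simp
  qed
  have SW: "(\<lambda>n. \<Sum>m. g m n) sums (\<Sum>m. \<Sum>n. g m n)"
    by (rule swap_sums[OF _ c]) (use rowabs in \<open>auto simp: sums_iff\<close>)
  have col: "(\<Sum>m. g m n) = 2 * (-1)^n * s^(2*n+2) * zeta2 (2*n+2)" for n
  proof -
    have "(\<lambda>m. (2 * (-1)^n * s^(2*n+2)) * (1 / real (Suc m) ^ (2*n+2))) sums ((2 * (-1)^n * s^(2*n+2)) * zeta2 (2*n+2))"
      by (intro sums_mult zeta2_sums) simp
    moreover have "(\<lambda>m. (2 * (-1)^n * s^(2*n+2)) * (1 / real (Suc m) ^ (2*n+2))) = (\<lambda>m. g m n)"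
    proof (rule ext)
      fix m
      have e: "2*n+2 = 2 * Suc n" by simp
      have "(u m)^(Suc n) = s^(2*n+2) / real (Suc m)^(2*n+2)"
        unfolding u_def e power_mult power_divide ..
      thus "(2 * (-1)^n * s^(2*n+2)) * (1 / real (Suc m) ^ (2*n+2)) = g m n"
        by (simp add: g_def)
    qed
    ultimately show ?thesis by (simp add: sums_iff)
  qed
  have tot: "(\<Sum>m. \<Sum>n. g m n) = t / (exp t - 1) - 1 + t / 2"
  proof -
    have "(\<Sum>m. \<Sum>n. g m n) = (\<Sum>m. 2 * s^2 / (s^2 + (real (Suc m))^2))"
      using row by (simp add: sums_iff)
    also have "\<dots> = t / (exp t - 1) - 1 + t / 2"
      using coth_pfd[OF t0] by (simp add: sums_iff s_def)
    finally show ?thesis .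
  qed
  show ?thesis using SW unfolding col tot s_def .
qed

lemma bern_sums:
  fixes t :: real assumes t0: "t \<noteq> 0" and t1: "\<bar>t\<bar> < 2*pi"
  shows "(\<lambda>n. bern n * t^n / fact n) sums (t / (exp t - 1))"
proof -
  define h where "h n = 2 * (-1)^n * (t/(2*pi))^(2*n+2) * zeta2 (2*n+2)" for n
  have hs: "h sums (t / (exp t - 1) - 1 + t / 2)" unfolding h_def by (rule bern_even_series[OF t0 t1])
  have E: "(\<lambda>n. if even n then h (n div 2) else (\<lambda>_. 0::real) ((n - 1) div 2)) sums (0 + (t / (exp t - 1) - 1 + t / 2))"
    by (rule sums_if[OF sums_zero hs])
  have eq: "(\<lambda>n. bern (n+2) * t^(n+2) / fact (n+2)) = (\<lambda>n. if even n then h (n div 2) else (\<lambda>_. 0::real) ((n - 1) div 2))"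
  proof (rule ext)
    fix n :: nat
    show "bern (n+2) * t^(n+2) / fact (n+2) = (if even n then h (n div 2) else (\<lambda>_. 0::real) ((n - 1) div 2))"
    proof (cases "even n")
      case True
      then obtain k where k: "n = 2*k" by auto
      have kk: "(n+2) div 2 = k + 1" using k by simp
      have "bern (n+2) = (-1)^(k+2) * 2 * fact (n+2) * zeta2 (n+2) / (2*pi)^(n+2)"
        unfolding bern_def using k by (simp add: kk)
      have gen: "\<And>F P T Z c::real. F \<noteq> 0 \<Longrightarrow> P \<noteq> 0 \<Longrightarrow> (c * 2 * F * Z / P) * T / F = 2 * c * (T / P) * Z"
        by (simp add: field_simps)
      have "bern (n+2) * t^(n+2) / fact (n+2) = 2 * (-1)^(k+2) * (t^(n+2)/(2*pi)^(n+2)) * zeta2 (n+2)"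
        unfolding \<open>bern (n+2) = _\<close> by (rule gen) auto
      hence "bern (n+2) * t^(n+2) / fact (n+2) = 2 * (-1)^k * (t/(2*pi))^(n+2) * zeta2 (n+2)"
        by (simp add: power_divide)
      thus ?thesis using True k by (simp add: h_def)
    next
      case False
      thus ?thesis by (simp add: bern_def)
    qed
  qed
  have "(\<lambda>n. bern (n+2) * t^(n+2) / fact (n+2)) sums (t / (exp t - 1) - 1 + t / 2)"
    using E unfolding eq by simp
  hence "(\<lambda>n. bern n * t^n / fact n) sums ((t / (exp t - 1) - 1 + t / 2) + (\<Sum>i<2. bern i * t^i / fact i))"
    using sums_iff_shift[of "\<lambda>n. bern n * t^n / fact n" 2] by simp
  also have "(\<Sum>i<2. bern i * t^i / fact i) = 1 - t/2"
    by (simp add: numeral_2_eq_2 bern_def)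
  finally show ?thesis by simp
qed

lemma powser_zero_unique:
  fixes d :: "nat \<Rightarrow> real"
  assumes r: "r > 0" and S: "\<And>t. 0 < t \<Longrightarrow> t < r \<Longrightarrow> (\<lambda>n. d n * t^n) sums 0"
  shows "d k = 0"
proof (induction k rule: less_induct)
  case (less k)
  define e where "e n = d (n + k)" for n
  have Se: "(\<lambda>n. e n * t^n) sums 0" if t: "0 < t" "t < r" for t
  proof -
    have "(\<lambda>n. d (n + k) * t^(n + k)) sums (0 - (\<Sum>i<k. d i * t^i))"
      using sums_iff_shift[of "\<lambda>n. d n * t^n" k] S[OF t] by simp
    also have "(\<Sum>i<k. d i * t^i) = 0" using less by simp
    finally have "(\<lambda>n. d (n + k) * t^(n + k)) sums 0" by simp
    from sums_mult[OF this, of "1 / t^k"]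
    show ?thesis using t by (simp add: e_def power_add field_simps)
  qed
  define f where "f x = (\<Sum>n. e n * x^n)" for x :: real
  have sm: "summable (\<lambda>n. e n * (r/2)^n)" using Se[of "r/2"] r by (auto simp: sums_iff)
  have ic: "isCont f 0" unfolding f_def by (rule isCont_powser[OF sm]) (use r in simp)
  have f0: "f 0 = e 0" by (simp add: f_def)
  have "(f \<longlongrightarrow> f 0) (at_right 0)" using ic by (simp add: isCont_def filterlim_at_split)
  moreover have "eventually (\<lambda>x. f x = 0) (at_right 0)"
    unfolding eventually_at_right[OF r]
    by (rule exI[of _ r]) (use r Se in \<open>auto simp: f_def sums_iff\<close>)
  hence "(f \<longlongrightarrow> 0) (at_right 0)" by (simp add: tendsto_eventually)
  ultimately have "f 0 = 0" using tendsto_unique trivial_limit_at_right_real by blast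
  thus ?case using f0 by (simp add: e_def)
qed

lemma bernoulli_num_eq: "bernoulli_num = bern"
proof -
  let ?P = "\<lambda>B. \<forall>t::real. 0 < \<bar>t\<bar> \<and> \<bar>t\<bar> < 2 * pi \<longrightarrow>
       (\<lambda>n. B n * t ^ n / fact n) sums (t / (exp t - 1))"
  have Pb: "?P bern" using bern_sums by auto
  have U: "B = bern" if PB: "?P B" for B
  proof
    fix k
    have "(bern k - B k) / fact k = 0"
    proof (rule powser_zero_unique[of "2*pi"])
      fix t :: real assume t: "0 < t" "t < 2*pi"
      have "(\<lambda>n. bern n * t^n / fact n - B n * t^n / fact n) sums (t / (exp t - 1) - t / (exp t - 1))"
        using Pb PB t by (intro sums_diff) auto
      thus "(\<lambda>n. (bern n - B n) / fact n * t^n) sums 0" by (simp add: field_simps)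
    qed simp
    thus "B k = bern k" by simp
  qed
  show ?thesis unfolding bernoulli_num_def using Pb U by (rule the_equality)
qed

lemma abs_bern_even:
  assumes "j \<ge> 1"
  shows "\<bar>bernoulli_num (2*j)\<bar> = 2 * fact (2*j) * zeta2 (2*j) / (2*pi)^(2*j)"
proof -
  have z: "zeta2 (2*j) > 0" using assms by (intro zeta2_pos) simp
  have "bernoulli_num (2*j) = (-1)^(j + 1) * (2 * fact (2*j) * zeta2 (2*j) / (2*pi)^(2*j))"
    using assms unfolding bernoulli_num_eq bern_def by simp
  thus ?thesis using z by (simp add: abs_mult)
qed

lemma geom_part:
  fixes u :: real assumes u1: "u \<noteq> 1" and u4: "u \<noteq> 4"
  shows "n \<ge> 1 \<Longrightarrow> (\<Sum>j=2..n. (u^j - 4*(u/4)^j)) =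
     u/(1-u) - u/(1-u/4) - u^(n+1)/(1-u) + (1/4)^n*u^(n+1)/(1-u/4)"
proof (induction n)
  case 0 thus ?case by simp
next
  case (Suc n)
  have d1: "1 - u \<noteq> 0" using u1 by simp
  have d4: "1 - u/4 \<noteq> 0" using u4 by simp
  show ?case
  proof (cases "n = 0")
    case True
    have "u/(1-u) - u^2/(1-u) = (u*(1-u))/(1-u)" by (simp add: power2_eq_square diff_divide_distrib algebra_simps)
    also have "\<dots> = u" using d1 by simp
    finally have A: "u/(1-u) - u^2/(1-u) = u" .
    have "u/(1-u/4) - (1/4)*u^2/(1-u/4) = (u*(1-u/4))/(1-u/4)" by (simp add: power2_eq_square diff_divide_distrib algebra_simps)
    also have "\<dots> = u" using d4 by simp
    finally have B: "u/(1-u/4) - (1/4)*u^2/(1-u/4) = u" .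
    have e: "u^(Suc 0 + 1) = u^2" "(1/4::real)^(Suc 0) = 1/4" by (simp_all add: numeral_2_eq_2)
    have z: "(\<Sum>j=2..Suc 0. (u^j - 4*(u/4)^j)) = 0" by simp
    show ?thesis unfolding True z e using A B by linarith
  next
    case False
    hence IH: "(\<Sum>j=2..n. (u^j - 4*(u/4)^j)) =
       u/(1-u) - u/(1-u/4) - u^(n+1)/(1-u) + (1/4)^n*u^(n+1)/(1-u/4)" using Suc by simp
    have s: "(\<Sum>j=2..Suc n. (u^j - 4*(u/4)^j)) = (\<Sum>j=2..n. (u^j - 4*(u/4)^j)) + (u^(n+1) - 4*(u/4)^(n+1))"
      using False by (simp add: sum.cl_ivl_Suc)
    define P where "P = u^(n+1)"
    define Q where "Q = (1/4::real)^n"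
    have e1: "4*(u/4)^(n+1) = Q * P" by (simp add: P_def Q_def power_divide field_simps)
    have e2: "u^(Suc n + 1) = u * P" by (simp add: P_def)
    have e3: "(1/4::real)^(Suc n) = Q / 4" by (simp add: Q_def)
    have g1: "- P/(1-u) + P = - (u*P)/(1-u)"
      using d1 by (simp add: field_simps)
    have g2: "Q*P/(1-u/4) - Q*P = (Q/4)*(u*P)/(1-u/4)"
      using d4 by (simp add: field_simps)
    have gen: "- P/(1-u) + Q*P/(1-u/4) + (P - Q*P) = - (u*P)/(1-u) + (Q/4)*(u*P)/(1-u/4)"
      using g1 g2 by linarith
    show ?thesis unfolding s IH e2 e3 e1 P_def[symmetric] Q_def[symmetric] using gen by linarith
  qed
qed

definition psi :: "nat \<Rightarrow> real \<Rightarrow> real" where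
  "psi N u = 1/(1-u) - (1/4)^N/(1-u/4)"

definition trm :: "nat \<Rightarrow> real \<Rightarrow> nat \<Rightarrow> real" where
  "trm N v m = 2 / (pi^(2*N+2) * real (Suc m)^(2*N+2)) * psi N (v / real (Suc m)^2)"

definition Psi :: "nat \<Rightarrow> real \<Rightarrow> real" where
  "Psi N v = (\<Sum>m. trm N v m)"

lemma psi_bounds:
  assumes N: "N \<ge> 1" and u: "0 \<le> u" "u \<le> 1/4"
  shows "0 \<le> psi N u" "psi N u \<le> 4/3"
proof -
  have a: "1 \<le> 1/(1-u)" using u by (simp add: field_simps)
  have a2: "1/(1-u) \<le> 4/3" using u by (simp add: field_simps)
  have q: "(1/4::real)^N \<le> 1/4"
  proof -
    have "(1/4::real)^N \<le> (1/4)^1" using N by (intro power_decreasing) auto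
    thus ?thesis by simp
  qed
  have b0: "0 \<le> (1/4::real)^N/(1-u/4)" using u by simp
  have b1: "(1/4::real)^N/(1-u/4) \<le> (1/4)/(1-u/4)" using u q by (intro divide_right_mono) auto
  have b2: "(1/4::real)/(1-u/4) \<le> 1" using u by (simp add: field_simps)
  show "0 \<le> psi N u" unfolding psi_def using a b1 b2 by linarith
  show "psi N u \<le> 4/3" unfolding psi_def using a2 b0 by linarith
qed

lemma psi_mono:
  assumes N: "N \<ge> 1" and pq: "0 \<le> p" "p < q" "q \<le> 1/4"
  shows "psi N p < psi N q"
proof -
  define D where "D = (1-p)*(1-q)"
  have A: "1/(1-q) - 1/(1-p) = (q-p)/D" using pq unfolding D_def by (simp add: field_simps)
  have A1: "D \<le> 1" unfolding D_def using pq by (intro mult_le_one) auto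
  have A2: "0 < D" unfolding D_def using pq by simp
  have "(q-p)*D \<le> (q-p)*1" using A1 pq by (intro mult_left_mono) auto
  hence Ai: "q - p \<le> 1/(1-q) - 1/(1-p)" unfolding A using A2 by (simp add: le_divide_eq)
  define D' where "D' = (1-p/4)*(1-q/4)"
  have n1: "1 - q/4 \<noteq> 0" "1 - p/4 \<noteq> 0" using pq by auto
  have B: "1/(1-q/4) - 1/(1-p/4) = ((q-p)/4)/D'" unfolding D'_def using n1
    by (simp add: divide_simps) (simp add: algebra_simps)
  have B1: "1/2 \<le> D'"
  proof -
    have "(15/16::real)*(15/16) \<le> (1-p/4)*(1-q/4)" using pq by (intro mult_mono) auto
    thus ?thesis unfolding D'_def by simp
  qed
  have "(q-p)/4 \<le> (q-p)/2 * D'"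
  proof -
    have "(q-p)/2 * (1/2) \<le> (q-p)/2 * D'" using B1 pq by (intro mult_left_mono) auto
    thus ?thesis by simp
  qed
  hence Bi: "1/(1-q/4) - 1/(1-p/4) \<le> (q-p)/2" unfolding B using B1 by (simp add: divide_le_eq)
  have Bn: "0 \<le> 1/(1-q/4) - 1/(1-p/4)" unfolding B using pq B1 by simp
  have q: "(1/4::real)^N \<le> 1" by (simp add: power_le_one)
  have "(1/4::real)^N/(1-q/4) - (1/4)^N/(1-p/4) = (1/4::real)^N * (1/(1-q/4) - 1/(1-p/4))"
    by (simp add: right_diff_distrib)
  also have "\<dots> \<le> 1 * (1/(1-q/4) - 1/(1-p/4))"
    using q Bn by (intro mult_right_mono) auto
  also have "\<dots> \<le> (q-p)/2" using Bi by simp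
  finally have "(1/4::real)^N/(1-q/4) - (1/4)^N/(1-p/4) \<le> (q-p)/2" .
  moreover have lin: "\<And>a b c d::real. c - d \<le> (q-p)/2 \<Longrightarrow> q-p \<le> a - b \<Longrightarrow> p < q \<Longrightarrow> b - d < a - c"
    by argo
  ultimately show ?thesis unfolding psi_def using Ai pq lin by blast
qed

lemma u_range:
  fixes v :: real assumes "0 \<le> v" "v \<le> 1/4"
  shows "0 \<le> v / real (Suc m)^2" "v / real (Suc m)^2 \<le> v"
proof -
  show "0 \<le> v / real (Suc m)^2" using assms by simp
  have "(1::real) \<le> real (Suc m)^2" by simp
  thus "v / real (Suc m)^2 \<le> v" using assms by (simp add: divide_le_eq mult_le_cancel_left1)
qed

lemma trm_bounds:
  assumes N: "N \<ge> 1" and v: "0 \<le> v" "v \<le> 1/4"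
  shows "0 \<le> trm N v m" "trm N v m \<le> (8/3) / pi^(2*N+2) * (1 / real (Suc m)^(2*N+2))"
proof -
  have u: "0 \<le> v / real (Suc m)^2" "v / real (Suc m)^2 \<le> 1/4"
    using u_range(1)[OF v, of m] apply simp using u_range(2)[OF v, of m] v(2) by linarith
  have c: "0 < 2 / (pi^(2*N+2) * real (Suc m)^(2*N+2))" by simp
  show "0 \<le> trm N v m" unfolding trm_def using psi_bounds(1)[OF N u] c by simp
  have "trm N v m \<le> 2 / (pi^(2*N+2) * real (Suc m)^(2*N+2)) * (4/3)"
    unfolding trm_def using psi_bounds(2)[OF N u] c by (intro mult_left_mono) auto
  also have "\<dots> = (8/3) / pi^(2*N+2) * (1 / real (Suc m)^(2*N+2))" by simp
  finally show "trm N v m \<le> (8/3) / pi^(2*N+2) * (1 / real (Suc m)^(2*N+2))" .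
qed

lemma summable_trm:
  assumes N: "N \<ge> 1" and v: "0 \<le> v" "v \<le> 1/4"
  shows "summable (trm N v)"
proof (rule summable_comparison_test')
  show "summable (\<lambda>m. (8/3) / pi^(2*N+2) * (1 / real (Suc m)^(2*N+2)))"
    by (intro summable_mult summable_zeta2) simp
next
  fix m :: nat assume "m \<ge> 0"
  show "norm (trm N v m) \<le> (8/3) / pi^(2*N+2) * (1 / real (Suc m)^(2*N+2))"
    using trm_bounds[OF N v, of m] by simp
qed

lemma Psi_strict_mono:
  assumes N: "N \<ge> 1" and vw: "0 \<le> v" "v < w" "w \<le> 1/4"
  shows "Psi N v < Psi N w"
proof -
  have v: "0 \<le> v" "v \<le> 1/4" and w: "0 \<le> w" "w \<le> 1/4" using vw by auto
  have pos: "0 < trm N w m - trm N v m" for m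
  proof -
    have r: "(0::real) < real (Suc m)^2" by simp
    have a: "0 \<le> v / real (Suc m)^2" using v by simp
    have b: "v / real (Suc m)^2 < w / real (Suc m)^2" using vw r by (simp add: divide_strict_right_mono)
    have c: "w / real (Suc m)^2 \<le> 1/4" using u_range(2)[OF w, of m] w by linarith
    have "psi N (v / real (Suc m)^2) < psi N (w / real (Suc m)^2)" by (rule psi_mono[OF N a b c])
    moreover have "0 < 2 / (pi^(2*N+2) * real (Suc m)^(2*N+2))" by simp
    ultimately show ?thesis unfolding trm_def right_diff_distrib[symmetric]
      by (intro mult_pos_pos) auto
  qed
  have "0 < (\<Sum>m. trm N w m - trm N v m)"
    by (rule suminf_pos[OF summable_diff[OF summable_trm[OF N w] summable_trm[OF N v]] pos])
  also have "(\<Sum>m. trm N w m - trm N v m) = Psi N w - Psi N v"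
    unfolding Psi_def by (rule suminf_diff[OF summable_trm[OF N w] summable_trm[OF N v], symmetric])
  finally show ?thesis by simp
qed

lemma Psi_0:
  shows "Psi N 0 = 2 * (1 - (1/4)^N) * zeta2 (2*N+2) / pi^(2*N+2)"
proof -
  have "(\<lambda>m. (2 * (1 - (1/4)^N) / pi^(2*N+2)) * (1 / real (Suc m)^(2*N+2))) sums
        ((2 * (1 - (1/4)^N) / pi^(2*N+2)) * zeta2 (2*N+2))"
    by (intro sums_mult zeta2_sums) simp
  moreover have "(\<lambda>m. (2 * (1 - (1/4)^N) / pi^(2*N+2)) * (1 / real (Suc m)^(2*N+2))) = trm N 0"
    by (rule ext) (simp add: trm_def psi_def)
  ultimately show ?thesis unfolding Psi_def by (simp add: sums_iff)
qed

lemma Psi_le: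
  assumes N: "N \<ge> 1" and v: "0 \<le> v" "v \<le> 1/4"
  shows "Psi N v \<le> Psi N 0 + v * (4 * zeta2 (2*N+2) / pi^(2*N+2))"
proof -
  have z: "0 \<le> (0::real)" "(0::real) \<le> 1/4" by auto
  have le: "trm N v m \<le> trm N 0 m + (4 * v / pi^(2*N+2)) * (1 / real (Suc m)^(2*N+2))" for m
  proof -
    define u where "u = v / real (Suc m)^2"
    have u: "0 \<le> u" "u \<le> v" using u_range[OF v, of m] by (auto simp: u_def)
    have "psi N u - psi N 0 \<le> 1/(1-u) - 1"
    proof -
      have "(1/4::real)^N/(1-0/4) \<le> (1/4)^N/(1-u/4)"
        using u v by (intro divide_left_mono) auto
      thus ?thesis unfolding psi_def by simp
    qed
    also have "1/(1-u) - 1 = u/(1-u)" using u v by (simp add: field_simps)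
    also have "\<dots> \<le> u / (1/2)" using u v by (intro divide_left_mono) auto
    also have "\<dots> \<le> 2 * v" using u by simp
    finally have ps: "psi N u \<le> psi N 0 + 2 * v" by simp
    have c: "0 < 2 / (pi^(2*N+2) * real (Suc m)^(2*N+2))" by simp
    have "trm N v m \<le> 2 / (pi^(2*N+2) * real (Suc m)^(2*N+2)) * (psi N 0 + 2 * v)"
      unfolding trm_def u_def[symmetric] using ps c by (intro mult_left_mono) auto
    also have "\<dots> = trm N 0 m + (4 * v / pi^(2*N+2)) * (1 / real (Suc m)^(2*N+2))"
    proof -
      have h: "\<And>x y z w::real. 2/(x*y)*(z + 2*w) = 2/(x*y)*z + 4*w/x*(1/y)"
        by (simp add: field_simps add_divide_distrib)
      show ?thesis unfolding h by (simp add: trm_def)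
    qed
    finally show ?thesis .
  qed
  have s2: "(\<lambda>m. (4 * v / pi^(2*N+2)) * (1 / real (Suc m)^(2*N+2))) sums ((4 * v / pi^(2*N+2)) * zeta2 (2*N+2))"
    by (intro sums_mult zeta2_sums) simp
  have "Psi N v \<le> (\<Sum>m. trm N 0 m + (4 * v / pi^(2*N+2)) * (1 / real (Suc m)^(2*N+2)))"
    unfolding Psi_def
    by (rule suminf_le[OF le summable_trm[OF N v] summable_add[OF summable_trm[OF N z] sums_summable[OF s2]]])
  also have "\<dots> = Psi N 0 + (4 * v / pi^(2*N+2)) * zeta2 (2*N+2)"
    unfolding Psi_def using suminf_add[OF summable_trm[OF N z] sums_summable[OF s2]] s2 by (simp add: sums_iff)
  finally show ?thesis by (simp add: mult_ac)
qed

lemma half_angle_id: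
  fixes x :: real assumes x0: "x \<noteq> 0" and xb: "\<bar>x\<bar> \<le> pi/2"
  shows "2 * (x / sin x) + x / tan x = 4 * ((x/2) * cot (x/2)) - x * cot x"
proof -
  define S where "S = sin (x/2)"
  define C where "C = cos (x/2)"
  have sx: "sin x = 2 * S * C" unfolding S_def C_def using sin_double[of "x/2"] by simp
  have cx: "cos x = 2 * C^2 - 1" unfolding C_def using cos_double_cos[of "x/2"] by simp
  have S0: "S \<noteq> 0"
  proof
    assume "S = 0"
    then obtain n :: int where n: "x/2 = of_int n * pi" unfolding S_def by (auto simp: sin_zero_iff_int2)
    have "\<bar>of_int n * pi\<bar> \<le> pi/4" using xb n by (simp add: abs_divide)
    hence "\<bar>of_int n :: real\<bar> * pi \<le> pi/4" by (simp add: abs_mult)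
    hence "\<bar>of_int n :: real\<bar> * pi \<le> (1/4) * pi" by simp
    hence "\<bar>of_int n :: real\<bar> \<le> 1/4" by (rule mult_right_le_imp_le) (use pi_gt_zero in simp)
    hence "\<bar>of_int n :: real\<bar> < 1" by simp
    hence "n = 0" by linarith
    thus False using n x0 by simp
  qed
  have C0: "C \<noteq> 0"
  proof -
    have "\<bar>x\<bar> < pi" using xb pi_gt_zero by linarith
    hence "\<bar>x/2\<bar> < pi/2" by (simp add: abs_divide)
    hence "cos (x/2) > 0" by (intro cos_gt_zero_pi) auto
    thus ?thesis by (simp add: C_def)
  qed
  have gdiv: "\<And>a y c K::real. (a - y*c)/K = a/K - y*(c/K)" by (simp add: diff_divide_distrib)
  have t: "x / tan x = x * cos x / sin x" by (simp add: tan_def)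
  have "2 * (x / sin x) + x / tan x = (2 * x + x * (2 * C^2 - 1)) / (2 * S * C)"
    unfolding t sx cx by (simp add: add_divide_distrib)
  also have "\<dots> = (4 * x * C^2 - x * (2 * C^2 - 1)) / (2 * S * C)"
    by (rule arg_cong[where f="\<lambda>t. t / (2 * S * C)"]) (simp add: algebra_simps)
  also have "\<dots> = (4 * x * C^2) / (2 * S * C) - x * ((2 * C^2 - 1) / (2 * S * C))"
    by (rule gdiv)
  also have "\<dots> = 4 * ((x/2) * (C / S)) - x * ((2 * C^2 - 1) / (2 * S * C))"
  proof -
    have "(4 * x * C^2) / (2 * S * C) = 4 * ((x/2) * (C / S))"
      using S0 C0 by (simp add: power2_eq_square)
    thus ?thesis by simp
  qed
  also have "\<dots> = 4 * ((x/2) * cot (x/2)) - x * cot x"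
    unfolding cot_def sx cx S_def[symmetric] C_def[symmetric] ..
  finally show ?thesis .
qed

lemma per_term:
  fixes x :: real
  assumes N: "N \<ge> 1" and xb: "\<bar>x\<bar> \<le> pi/2"
  shows "4 * (2*(x/2)^2/((x/2)^2 - (real (Suc m)*pi)^2)) - 2*x^2/(x^2 - (real (Suc m)*pi)^2)
          - (\<Sum>j\<in>{2..N}. (2*((x/pi)^(2*j) - 4*(x/(2*pi))^(2*j))) * (1/real (Suc m)^(2*j)))
         = x^(2*N+2) * trm N ((x/pi)^2) m"
proof -
  define M where "M = real (Suc m) * pi"
  have M0: "M > 0" by (simp add: M_def)
  define u where "u = (x/M)^2"
  have u0: "0 \<le> u" by (simp add: u_def)
  have u4: "u \<le> 1/4"
  proof -
    have "pi \<le> M" unfolding M_def using pi_gt_zero by simp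
    hence "\<bar>x\<bar> \<le> M/2" using xb by linarith
    hence "\<bar>x/M\<bar> \<le> 1/2" using M0 by (simp add: abs_divide divide_le_eq)
    hence h: "\<bar>x/M\<bar>^2 \<le> (1/2)^2" by (intro power_mono) auto
    have uu: "u = \<bar>x/M\<bar>^2" unfolding u_def by (rule power2_abs[symmetric])
    from h have "u \<le> (1/2)^2" unfolding uu .
    thus ?thesis by (simp add: power2_eq_square)
  qed
  have u1: "u \<noteq> 1" "1 - u \<noteq> 0" "u \<noteq> 4" "1 - u/4 \<noteq> 0" using u4 by auto
  have xM: "x^2 = u * M^2" using M0 by (simp add: u_def power_divide)
  have eA: "2*x^2/(x^2 - (real (Suc m)*pi)^2) = - (2 * (u/(1-u)))"
  proof -
    have "2*x^2/(x^2 - (real (Suc m)*pi)^2) = 2*(u*M^2)/(u*M^2 - M^2)" unfolding xM M_def ..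
    also have "\<dots> = 2*u/(u - 1)" using M0 u1 by (simp add: field_simps)
    also have "\<dots> = - (2 * (u/(1-u)))" using u1 by (simp add: field_simps)
    finally show ?thesis .
  qed
  have eB: "4 * (2*(x/2)^2/((x/2)^2 - (real (Suc m)*pi)^2)) = - (2 * (u/(1-u/4)))"
  proof -
    have x2: "(x/2)^2 = (u/4) * M^2" using xM by (simp add: power_divide)
    have Mf: "real (Suc m) * pi = M" by (simp add: M_def)
    have "4 * (2*(x/2)^2/((x/2)^2 - (real (Suc m)*pi)^2)) = 4 * (2*((u/4)*M^2)/((u/4)*M^2 - M^2))"
      unfolding x2 Mf ..
    also have "\<dots> = 2*u/(u/4 - 1)" using M0 u1 by (simp add: field_simps)
    also have "\<dots> = - (2 * (u/(1-u/4)))" using u1 by (simp add: field_simps)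
    finally show ?thesis .
  qed
  have eC: "(2*((x/pi)^(2*j) - 4*(x/(2*pi))^(2*j))) * (1/real (Suc m)^(2*j)) = 2 * (u^j - 4*(u/4)^j)" for j
  proof -
    have a1: "(x/pi)^(2*j) * (1/real (Suc m)^(2*j)) = (x/M)^(2*j)"
      by (simp add: M_def power_divide power_mult_distrib mult.commute)
    have a: "(x/pi)^(2*j) * (1/real (Suc m)^(2*j)) = u^j"
      unfolding u_def using a1 by (simp add: power_mult)
    have b1: "(x/(2*pi))^(2*j) * (1/real (Suc m)^(2*j)) = ((x/M)^2/4)^j"
    proof -
      have "(x/(2*pi))^(2*j) * (1/real (Suc m)^(2*j)) = (x/(2*M))^(2*j)"
        by (simp add: M_def power_divide power_mult_distrib mult.commute)
      also have "\<dots> = ((x/(2*M))^2)^j" by (simp add: power_mult)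
      also have "(x/(2*M))^2 = (x/M)^2/4" by (simp add: power_divide power_mult_distrib)
      finally show ?thesis .
    qed
    have b: "(x/(2*pi))^(2*j) * (1/real (Suc m)^(2*j)) = (u/4)^j"
      unfolding u_def using b1 by simp
    show ?thesis using a b by (simp add: algebra_simps)
  qed
  have eS: "(\<Sum>j\<in>{2..N}. (2*((x/pi)^(2*j) - 4*(x/(2*pi))^(2*j))) * (1/real (Suc m)^(2*j)))
      = 2 * (u/(1-u) - u/(1-u/4) - u^(N+1)/(1-u) + (1/4)^N*u^(N+1)/(1-u/4))"
    unfolding eC sum_distrib_left[symmetric] geom_part[OF u1(1) u1(3) N] ..
  have eT: "x^(2*N+2) * trm N ((x/pi)^2) m = 2 * (u^(N+1)/(1-u)) - 2 * ((1/4)^N*u^(N+1)/(1-u/4))"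
  proof -
    have v: "(x/pi)^2 / real (Suc m)^2 = u" by (simp add: u_def M_def power_divide power_mult_distrib)
    have w: "x^(2*N+2) / (pi^(2*N+2) * real (Suc m)^(2*N+2)) = u^(N+1)"
    proof -
      have e: "2*N+2 = 2*(N+1)" by simp
      show ?thesis unfolding e u_def M_def power_mult by (simp add: power_divide power_mult_distrib)
    qed
    have "x^(2*N+2) * trm N ((x/pi)^2) m = (x^(2*N+2) * (2 / (pi^(2*N+2) * real (Suc m)^(2*N+2)))) * psi N u"
      unfolding trm_def v by simp
    also have "x^(2*N+2) * (2 / (pi^(2*N+2) * real (Suc m)^(2*N+2))) = 2 * u^(N+1)"
    proof -
      have g: "\<And>a b::real. a*(2/b) = 2*(a/b)" by simp
      show ?thesis unfolding g w ..
    qed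
    finally show ?thesis by (simp add: psi_def right_diff_distrib)
  qed
  show ?thesis unfolding eA eB eS eT by simp
qed

lemma F_formula:
  fixes x :: real
  assumes N: "N \<ge> 1" and x0: "x \<noteq> 0" and xb: "\<bar>x\<bar> \<le> pi/2"
  shows "2 * (x / sin x) + x / tan x
          - (3 + (\<Sum>j=2..N. (2 ^ (2*j) - 4) * \<bar>bernoulli_num (2*j)\<bar> / fact (2*j) * x ^ (2*j)))
         = x^(2*N+2) * Psi N ((x/pi)^2)"
proof -
  have xp: "\<bar>x\<bar> < pi" using xb pi_gt_zero by linarith
  have x2p: "\<bar>x/2\<bar> < pi" using xp by (simp add: abs_divide)
  have x20: "x/2 \<noteq> 0" using x0 by simp
  have A: "(\<lambda>m. 2*x^2/(x^2 - (real (Suc m)*pi)^2)) sums (x * cot x - 1)"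
    by (rule cot_pfd_real[OF x0 xp])
  have B: "(\<lambda>m. 2*(x/2)^2/((x/2)^2 - (real (Suc m)*pi)^2)) sums ((x/2) * cot (x/2) - 1)"
    by (rule cot_pfd_real[OF x20 x2p])
  define cf where "cf j = 2*((x/pi)^(2*j) - 4*(x/(2*pi))^(2*j))" for j
  define bt where "bt j = (2 ^ (2*j) - 4) * \<bar>bernoulli_num (2*j)\<bar> / fact (2*j) * x ^ (2*j)" for j
  have Cj: "(\<lambda>m. cf j * (1/real (Suc m)^(2*j))) sums bt j" if j: "j \<in> {2..N}" for j
  proof -
    have j2: "2*j \<ge> 2" and j1: "j \<ge> 1" using j by auto
    have s: "(\<lambda>m. cf j * (1/real (Suc m)^(2*j))) sums (cf j * zeta2 (2*j))"
      by (intro sums_mult zeta2_sums j2)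
    have "bt j = (2 ^ (2*j) - 4) * (2 * zeta2 (2*j) / (2*pi)^(2*j)) * x^(2*j)"
      unfolding bt_def abs_bern_even[OF j1] by simp
    also have "\<dots> = cf j * zeta2 (2*j)"
    proof -
      define Q where "Q = (x/(2*pi))^(2*j)"
      have q1: "(x/pi)^(2*j) = 2^(2*j) * Q"
      proof -
        have "x/pi = 2 * (x/(2*pi))" by simp
        thus ?thesis unfolding Q_def by (metis power_mult_distrib)
      qed
      have q2: "x^(2*j) / (2*pi)^(2*j) = Q" unfolding Q_def by (simp add: power_divide)
      have "(2 ^ (2*j) - 4) * (2 * zeta2 (2*j) / (2*pi)^(2*j)) * x^(2*j)
          = 2 * (2 ^ (2*j) - 4) * zeta2 (2*j) * (x^(2*j) / (2*pi)^(2*j))" by simp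
      also have "\<dots> = cf j * zeta2 (2*j)" unfolding q2 cf_def q1 Q_def[symmetric]
        by (simp add: algebra_simps)
      finally show ?thesis .
    qed
    finally show ?thesis using s by simp
  qed
  have Cs: "(\<lambda>m. \<Sum>j\<in>{2..N}. cf j * (1/real (Suc m)^(2*j))) sums (\<Sum>j\<in>{2..N}. bt j)"
    by (rule sums_sum) (rule Cj)
  have T: "(\<lambda>m. 4 * (2*(x/2)^2/((x/2)^2 - (real (Suc m)*pi)^2)) - 2*x^2/(x^2 - (real (Suc m)*pi)^2)
           - (\<Sum>j\<in>{2..N}. cf j * (1/real (Suc m)^(2*j))))
        sums (4 * ((x/2) * cot (x/2) - 1) - (x * cot x - 1) - (\<Sum>j\<in>{2..N}. bt j))"
    by (intro sums_diff sums_mult A B Cs)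
  have T2: "(\<lambda>m. x^(2*N+2) * trm N ((x/pi)^2) m)
        sums (4 * ((x/2) * cot (x/2) - 1) - (x * cot x - 1) - (\<Sum>j\<in>{2..N}. bt j))"
    using T unfolding cf_def per_term[OF N xb] .
  have v: "0 \<le> (x/pi)^2" "(x/pi)^2 \<le> 1/4"
  proof -
    show "0 \<le> (x/pi)^2" by simp
    have "\<bar>x/pi\<bar> \<le> 1/2" using xb pi_gt_zero by (simp add: abs_divide divide_le_eq)
    hence h: "\<bar>x/pi\<bar>^2 \<le> (1/2)^2" by (intro power_mono) auto
    have uu: "(x/pi)^2 = \<bar>x/pi\<bar>^2" by (rule power2_abs[symmetric])
    from h have "(x/pi)^2 \<le> (1/2)^2" unfolding uu .
    thus "(x/pi)^2 \<le> 1/4" by (simp add: power2_eq_square)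
  qed
  have T3: "(\<lambda>m. x^(2*N+2) * trm N ((x/pi)^2) m) sums (x^(2*N+2) * Psi N ((x/pi)^2))"
    unfolding Psi_def by (intro sums_mult summable_sums summable_trm[OF N v])
  have "4 * ((x/2) * cot (x/2) - 1) - (x * cot x - 1) - (\<Sum>j\<in>{2..N}. bt j) = x^(2*N+2) * Psi N ((x/pi)^2)"
    using sums_unique2[OF T2 T3] .
  moreover have "2 * (x / sin x) + x / tan x = 4 * ((x/2) * cot (x/2)) - x * cot x"
    by (rule half_angle_id[OF x0 xb])
  ultimately show ?thesis unfolding bt_def by simp
qed

lemma summable_bound:
  fixes f :: "nat \<Rightarrow> real"
  assumes N: "N \<ge> 1" and b: "\<And>m. \<bar>f m\<bar> \<le> C * (1 / real (Suc m)^(2*N))"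
  shows "summable f"
proof (rule summable_comparison_test')
  show "summable (\<lambda>m. C * (1 / real (Suc m)^(2*N)))"
    using N by (intro summable_mult summable_zeta2) simp
next
  fix m :: nat assume "m \<ge> 0" thus "norm (f m) \<le> C * (1 / real (Suc m)^(2*N))" using b by simp
qed

lemma inv_bound:
  fixes K c :: real assumes "K \<ge> 1" "c \<ge> 1"
  shows "\<bar>s / (K^n * c)\<bar> \<le> \<bar>s\<bar> * (1 / K^n)"
proof -
  have K: "K^n \<ge> 1" using assms by simp
  have "\<bar>s / (K^n * c)\<bar> = \<bar>s\<bar> / (K^n * c)" using assms K by (simp add: abs_divide abs_mult)
  also have "\<dots> \<le> \<bar>s\<bar> / (K^n * 1)" using assms K by (intro divide_left_mono mult_left_mono) auto
  finally show ?thesis by simp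
qed

lemma b_terms:
  fixes K D :: real assumes K: "K \<ge> 1" and D: "D > 0"
  shows "8 / P * (s / (D * (2*K - 1)) - s / (D * (2*K + 1))) - 4 / P * (1 / (D * (2*K - 1)) - 1 / (D * (2*K + 1)))
       = 1 / P * (8 / (D * (4*K^2 - 1)) - 16 * (1 - s) / (D * (4*K^2 - 1)))"
proof -
  have a: "2*K - 1 > 0" "2*K + 1 > 0" using K by auto
  have e: "4*K^2 - 1 = (2*K - 1) * (2*K + 1)" by (simp add: power2_eq_square algebra_simps)
  have gd: "\<And>A C::real. A > 0 \<Longrightarrow> C > 0 \<Longrightarrow> 1 / (D * A) - 1 / (D * C) = (C - A) / (D * (A * C))"
    using D by (simp add: field_simps)
  have d: "1 / (D * (2*K - 1)) - 1 / (D * (2*K + 1)) = 2 / (D * (4*K^2 - 1))"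
    unfolding e gd[OF a] by simp
  have d2: "s / (D * (2*K - 1)) - s / (D * (2*K + 1)) = s * (2 / (D * (4*K^2 - 1)))"
    using d by (simp add: right_diff_distrib[symmetric] times_divide_eq_right[symmetric] divide_inverse)
  have g: "\<And>Z. 8/P*(s*(2/Z)) - 4/P*(2/Z) = 1/P*(8/Z - 16*(1-s)/Z)"
    by (simp add: divide_inverse algebra_simps)
  show ?thesis unfolding d d2 by (rule g)
qed

lemma trm_quarter:
  assumes N: "N \<ge> 1"
  shows "trm N (1/4) m = 1 / pi^(2*N+2) * (8 / (real (Suc m)^(2*N) * (4 * real (Suc m)^2 - 1))
           - 32 * (1/4)^N / (real (Suc m)^(2*N) * (16 * real (Suc m)^2 - 1)))"
proof -
  define K where "K = real (Suc m)"
  define Kp where "Kp = K^(2*N)"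
  define P where "P = pi^(2*N+2)"
  have K1: "K \<ge> 1" by (simp add: K_def)
  have Kp0: "Kp > 0" using K1 by (simp add: Kp_def)
  have P0: "P > 0" by (simp add: P_def)
  have K2: "K^2 \<ge> 1" using K1 by (rule one_le_power)
  have a: "4*K^2 - 1 > 0" "16*K^2 - 1 > 0" using K2 by linarith+
  have w: "1/4 / K^2 = 1 / (4*K^2)" by simp
  have p1: "1/(1 - 1/(4*K^2)) = 4*K^2 / (4*K^2 - 1)"
    using K1 a by (simp add: field_simps)
  have p2: "(1/4::real)^N/(1 - 1/(4*K^2)/4) = (1/4)^N * (16*K^2 / (16*K^2 - 1))"
    using K1 a by (simp add: field_simps)
  have e: "K^(2*N+2) = Kp * K^2" unfolding Kp_def by (rule power_add)
  have "trm N (1/4) m = 2 / (P * (Kp * K^2)) * (4*K^2 / (4*K^2 - 1) - (1/4)^N * (16*K^2 / (16*K^2 - 1)))"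
    unfolding trm_def psi_def K_def[symmetric] w p1 p2 e P_def ..
  also have "\<dots> = 1 / P * (8 / (Kp * (4*K^2 - 1)) - 32 * (1/4)^N / (Kp * (16*K^2 - 1)))"
  proof -
    have g: "\<And>Q A B c. Q > 0 \<Longrightarrow> A > 0 \<Longrightarrow> B > 0 \<Longrightarrow>
       2 / (P * (Kp * Q)) * (4*Q/A - c * (16*Q/B)) = 1/P * (8/(Kp*A) - 32*c/(Kp*B))"
      using Kp0 P0 by (simp add: field_simps)
    have Q: "K^2 > 0" using K2 by linarith
    show ?thesis by (rule g[OF Q a])
  qed
  finally show ?thesis unfolding K_def Kp_def P_def .
qed

lemma Psi_quarter:
  assumes N: "N \<ge> 1"
  shows "Psi N (1/4) = 8 / pi ^ (2*N+2) *
             ((\<Sum>k. (-1) ^ (k+2) / (real (k+1) ^ (2*N) * (2 * real (k+1) - 1)))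
              - (\<Sum>k. (-1) ^ (k+2) / (real (k+1) ^ (2*N) * (2 * real (k+1) + 1))))
           - 4 / pi ^ (2*N+2) *
             ((\<Sum>k. 1 / (real (k+1) ^ (2*N) * (2 * real (k+1) - 1)))
              - (\<Sum>k. 1 / (real (k+1) ^ (2*N) * (2 * real (k+1) + 1))))"
proof -
  define P where "P = pi^(2*N+2)"
  define h where "h m = 8 / (real (Suc m)^(2*N) * (4 * real (Suc m)^2 - 1))" for m
  define g where "g m = 32 * (1/4)^N / (real (Suc m)^(2*N) * (16 * real (Suc m)^2 - 1))" for m
  define e where "e m = 16 * (1 - (-1)^m) / (real (Suc m)^(2*N) * (4 * real (Suc m)^2 - 1))" for m
  define s1 where "s1 k = (-1) ^ (k+2) / (real (k+1) ^ (2*N) * (2 * real (k+1) - 1))" for k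
  define s2 where "s2 k = (-1) ^ (k+2) / (real (k+1) ^ (2*N) * (2 * real (k+1) + 1))" for k
  define t1 where "t1 k = 1 / (real (k+1) ^ (2*N) * (2 * real (k+1) - 1))" for k
  define t2 where "t2 k = 1 / (real (k+1) ^ (2*N) * (2 * real (k+1) + 1))" for k
  have K1: "real (Suc m) \<ge> 1" for m by simp
  have K2: "real (Suc m)^2 \<ge> 1" for m using K1 by (rule one_le_power)
  have c4: "4 * real (Suc m)^2 - 1 \<ge> 1" for m using K2[of m] by linarith
  have c16: "16 * real (Suc m)^2 - 1 \<ge> 1" for m using K2[of m] by linarith
  have cm: "2 * real (Suc m) - 1 \<ge> 1" for m by simp
  have cp: "2 * real (Suc m) + 1 \<ge> 1" for m by simp
  have hs: "summable h"
  proof (rule summable_bound[OF N, of _ "8"])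
    fix m :: nat
    show "\<bar>h m\<bar> \<le> 8 * (1 / real (Suc m)^(2*N))"
      using inv_bound[OF K1[of m] c4[of m], of "8" "2*N"] by (simp add: h_def)
  qed
  have gs: "summable g"
  proof (rule summable_bound[OF N, of _ "32 * (1/4)^N"])
    fix m :: nat
    show "\<bar>g m\<bar> \<le> 32 * (1/4)^N * (1 / real (Suc m)^(2*N))"
      using inv_bound[OF K1[of m] c16[of m], of "32 * (1/4)^N" "2*N"] by (simp add: g_def)
  qed
  have s1s: "summable s1"
  proof (rule summable_bound[OF N, of _ "1"])
    fix m :: nat
    show "\<bar>s1 m\<bar> \<le> 1 * (1 / real (Suc m)^(2*N))"
      using inv_bound[OF K1[of m] cm[of m], of "(-1)^(m+2)" "2*N"] by (simp add: s1_def)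
  qed
  have s2s: "summable s2"
  proof (rule summable_bound[OF N, of _ "1"])
    fix m :: nat
    show "\<bar>s2 m\<bar> \<le> 1 * (1 / real (Suc m)^(2*N))"
      using inv_bound[OF K1[of m] cp[of m], of "(-1)^(m+2)" "2*N"] by (simp add: s2_def)
  qed
  have t1s: "summable t1"
  proof (rule summable_bound[OF N, of _ "1"])
    fix m :: nat
    show "\<bar>t1 m\<bar> \<le> 1 * (1 / real (Suc m)^(2*N))"
      using inv_bound[OF K1[of m] cm[of m], of "1" "2*N"] by (simp add: t1_def)
  qed
  have t2s: "summable t2"
  proof (rule summable_bound[OF N, of _ "1"])
    fix m :: nat
    show "\<bar>t2 m\<bar> \<le> 1 * (1 / real (Suc m)^(2*N))"
      using inv_bound[OF K1[of m] cp[of m], of "1" "2*N"] by (simp add: t2_def)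
  qed
  have e_eq: "e = (\<lambda>n. if even n then 0 else g ((n - 1) div 2))"
  proof
    fix n :: nat
    show "e n = (if even n then 0 else g ((n - 1) div 2))"
    proof (cases "even n")
      case True thus ?thesis by (simp add: e_def)
    next
      case False
      then obtain i where i: "n = 2*i + 1" by (metis oddE)
      define a where "a = real (Suc i)"
      have ra: "real (Suc n) = 2 * a" by (simp add: i a_def)
      have p: "(2*a)^(2*N) = 4^N * a^(2*N)" by (simp add: power_mult_distrib power_mult)
      have q: "4 * (2*a)^2 - 1 = 16 * a^2 - 1" by (simp add: power_mult_distrib)
      have m1: "(1 - (-1::real)^n) = 2" using False by simp
      have "e n = 32 / (4^N * a^(2*N) * (16 * a^2 - 1))"
        unfolding e_def ra p q m1 by simp
      also have "\<dots> = g i" unfolding g_def a_def[symmetric] by (simp add: power_one_over field_simps)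
      finally show ?thesis using False i by simp
    qed
  qed
  have es: "e sums (suminf g)" unfolding e_eq by (rule sums_if'[OF summable_sums[OF gs]])
  have Psi1: "(\<lambda>m. 1/P * (h m - g m)) sums (1/P * (suminf h - suminf g))"
    by (intro sums_mult sums_diff summable_sums hs gs)
  have Psi2: "trm N (1/4) = (\<lambda>m. 1/P * (h m - g m))"
    by (rule ext) (simp add: trm_quarter[OF N] h_def g_def P_def)
  have PsiV: "Psi N (1/4) = 1/P * (suminf h - suminf g)"
    unfolding Psi_def Psi2 using Psi1 by (simp add: sums_iff)
  have B1: "(\<lambda>k. 8/P * (s1 k - s2 k) - 4/P * (t1 k - t2 k)) sums
        (8/P * (suminf s1 - suminf s2) - 4/P * (suminf t1 - suminf t2))"
    by (intro sums_mult sums_diff summable_sums s1s s2s t1s t2s)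
  have B2: "(\<lambda>k. 8/P * (s1 k - s2 k) - 4/P * (t1 k - t2 k)) = (\<lambda>k. 1/P * (h k - e k))"
  proof
    fix k :: nat
    have Kk: "real (k+1) \<ge> 1" by simp
    have Dk: "real (k+1)^(2*N) > 0" by simp
    have sg: "(-1::real)^(k+2) = (-1)^k" by simp
    show "8/P * (s1 k - s2 k) - 4/P * (t1 k - t2 k) = 1/P * (h k - e k)"
      unfolding s1_def s2_def t1_def t2_def b_terms[OF Kk Dk] h_def e_def sg
      by (simp add: diff_divide_distrib)
  qed
  have B3: "(\<lambda>k. 1/P * (h k - e k)) sums (1/P * (suminf h - suminf g))"
    by (intro sums_mult sums_diff summable_sums hs es)
  have "8/P * (suminf s1 - suminf s2) - 4/P * (suminf t1 - suminf t2) = 1/P * (suminf h - suminf g)"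
    using B1 unfolding B2 using B3 by (simp add: sums_iff)
  thus ?thesis unfolding PsiV s1_def s2_def t1_def t2_def P_def by simp
qed

lemma a_eq:
  assumes N: "N \<ge> 1"
  shows "(2 ^ (2*N+2) - 4) * \<bar>bernoulli_num (2*N+2)\<bar> / fact (2*N+2) = Psi N 0"
proof -
  have e: "2*N+2 = 2*(N+1)" by simp
  have B: "\<bar>bernoulli_num (2*N+2)\<bar> = 2 * fact (2*N+2) * zeta2 (2*N+2) / (2*pi)^(2*N+2)"
    unfolding e by (rule abs_bern_even) simp
  have f: "fact (2*N+2) \<noteq> (0::real)" by simp
  have p0: "(2::real)^(2*N) = (2^2)^N" by (rule power_mult)
  have four: "(2::real)^2 = 4" by simp
  have p1: "(2::real)^(2*N) = 4^N" unfolding p0 four ..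
  have p: "(2::real)^(2*N+2) = 4 * 4^N"
  proof -
    have "(2::real)^(2*N+2) = 2^(2*N) * 2^2" by (rule power_add)
    also have "\<dots> = 4^N * 4" unfolding p1 four ..
    finally show ?thesis by (simp only: mult.commute)
  qed
  have q: "(2*pi)^(2*N+2) = 4 * 4^N * pi^(2*N+2)"
    unfolding power_mult_distrib p ..
  have g: "\<And>X Pp F Z::real. X > 0 \<Longrightarrow> Pp > 0 \<Longrightarrow> F \<noteq> 0 \<Longrightarrow>
      (4*X - 4) * (2 * F * Z / (4 * X * Pp)) / F = 2 * (1 - 1/X) * Z / Pp"
    by (simp add: field_simps)
  have "(2 ^ (2*N+2) - 4) * \<bar>bernoulli_num (2*N+2)\<bar> / fact (2*N+2)
      = 2 * (1 - 1/4^N) * zeta2 (2*N+2) / pi^(2*N+2)"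
    unfolding B p q by (rule g) (simp_all)
  also have "\<dots> = 2 * (1 - (1/4)^N) * zeta2 (2*N+2) / pi^(2*N+2)"
    by (simp add: power_one_over)
  also have "\<dots> = Psi N 0" by (rule Psi_0[symmetric])
  finally show ?thesis .
qed

theorem theorem9:
  fixes N :: nat
  assumes "N \<ge> 1"
  defines "F \<equiv> (\<lambda>x::real. 2 * (x / sin x) + x / tan x
             - (3 + (\<Sum>j=2..N. (2 ^ (2*j) - 4) * \<bar>bernoulli_num (2*j)\<bar> / fact (2*j) * x ^ (2*j))))"
    and "a \<equiv> (2 ^ (2*N+2) - 4) * \<bar>bernoulli_num (2*N+2)\<bar> / fact (2*N+2)"
    and "b \<equiv> 8 / pi ^ (2*N+2) *
             ((\<Sum>k. (-1) ^ (k+2) / (real (k+1) ^ (2*N) * (2 * real (k+1) - 1)))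
              - (\<Sum>k. (-1) ^ (k+2) / (real (k+1) ^ (2*N) * (2 * real (k+1) + 1))))
           - 4 / pi ^ (2*N+2) *
             ((\<Sum>k. 1 / (real (k+1) ^ (2*N) * (2 * real (k+1) - 1)))
              - (\<Sum>k. 1 / (real (k+1) ^ (2*N) * (2 * real (k+1) + 1))))"
  shows "(\<forall>x::real. 0 < \<bar>x\<bar> \<and> \<bar>x\<bar> < pi / 2 \<longrightarrow>
            a * x ^ (2*N+2) < F x \<and> F x < b * x ^ (2*N+2))
       \<and> (\<forall>c::real. (\<forall>x::real. 0 < \<bar>x\<bar> \<and> \<bar>x\<bar> < pi / 2 \<longrightarrow> c * x ^ (2*N+2) < F x) \<longrightarrow> c \<le> a)
       \<and> (\<forall>c::real. (\<forall>x::real. 0 < \<bar>x\<bar> \<and> \<bar>x\<bar> < pi / 2 \<longrightarrow> F x < c * x ^ (2*N+2)) \<longrightarrow> b \<le> c)"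
proof -
  have N: "N \<ge> 1" by (rule assms(1))
  have Fx: "F x = x^(2*N+2) * Psi N ((x/pi)^2)" if "x \<noteq> 0" "\<bar>x\<bar> \<le> pi/2" for x
    unfolding F_def using F_formula[OF N that] by simp
  have aP: "a = Psi N 0" unfolding a_def by (rule a_eq[OF N])
  have bP: "b = Psi N (1/4)" unfolding b_def by (rule Psi_quarter[OF N, symmetric])
  have xpos: "x^(2*N+2) > 0" if "x \<noteq> 0" for x :: real
  proof -
    have e: "2*N+2 = 2*(N+1)" by simp
    have "x^(2*N+2) = (x^2)^(N+1)" unfolding e by (rule power_mult)
    moreover have "(x^2)^(N+1) > 0" using that by simp
    ultimately show ?thesis by simp
  qed
  have vr: "0 < (x/pi)^2 \<and> (x/pi)^2 < 1/4" if "0 < \<bar>x\<bar>" "\<bar>x\<bar> < pi/2" for x :: real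
  proof
    show "0 < (x/pi)^2" using that by simp
    have "\<bar>x/pi\<bar> < 1/2" using that pi_gt_zero by (simp add: abs_divide divide_less_eq)
    hence h: "\<bar>x/pi\<bar>^2 < (1/2)^2" by (intro power_strict_mono) auto
    have uu: "(x/pi)^2 = \<bar>x/pi\<bar>^2" by (rule power2_abs[symmetric])
    from h have "(x/pi)^2 < (1/2)^2" unfolding uu .
    thus "(x/pi)^2 < 1/4" by (simp add: power2_eq_square)
  qed
  have P1: "\<forall>x::real. 0 < \<bar>x\<bar> \<and> \<bar>x\<bar> < pi / 2 \<longrightarrow>
            a * x ^ (2*N+2) < F x \<and> F x < b * x ^ (2*N+2)"
  proof (intro allI impI)
    fix x :: real assume x: "0 < \<bar>x\<bar> \<and> \<bar>x\<bar> < pi / 2"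
    have x0: "x \<noteq> 0" using x by auto
    have v: "0 < (x/pi)^2" "(x/pi)^2 < 1/4" using vr x by auto
    have l: "Psi N 0 < Psi N ((x/pi)^2)" by (rule Psi_strict_mono[OF N]) (use v in auto)
    have r: "Psi N ((x/pi)^2) < Psi N (1/4)" by (rule Psi_strict_mono[OF N]) (use v in auto)
    have Fe: "F x = x^(2*N+2) * Psi N ((x/pi)^2)" using Fx[OF x0] x by simp
    show "a * x ^ (2*N+2) < F x \<and> F x < b * x ^ (2*N+2)"
      unfolding Fe aP bP using mult_strict_right_mono[OF l xpos[OF x0]] mult_strict_right_mono[OF r xpos[OF x0]]
      by (simp add: mult.commute)
  qed
  have P2: "\<forall>c::real. (\<forall>x::real. 0 < \<bar>x\<bar> \<and> \<bar>x\<bar> < pi / 2 \<longrightarrow> c * x ^ (2*N+2) < F x) \<longrightarrow> c \<le> a"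
  proof (intro allI impI)
    fix c :: real
    assume H: "\<forall>x::real. 0 < \<bar>x\<bar> \<and> \<bar>x\<bar> < pi / 2 \<longrightarrow> c * x ^ (2*N+2) < F x"
    show "c \<le> a"
    proof (rule ccontr)
      assume "\<not> c \<le> a"
      hence ca: "a < c" by simp
      define K where "K = 4 * zeta2 (2*N+2) / pi^(2*N+2)"
      have K0: "K > 0" unfolding K_def using zeta2_pos[of "2*N+2"] by simp
      define v where "v = min (1/8) ((c - a) / (2*K))"
      have v0: "0 < v" using ca K0 by (simp add: v_def)
      have v8: "v \<le> 1/8" by (simp add: v_def)
      have vK: "v * K \<le> (c - a) / 2"
      proof -
        have "v \<le> (c - a) / (2*K)" by (simp add: v_def)
        hence "v * K \<le> (c - a) / (2*K) * K" using K0 by (intro mult_right_mono) auto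
        thus ?thesis using K0 by simp
      qed
      define x where "x = pi * sqrt v"
      have sv: "sqrt v < 1/2"
      proof (rule ccontr)
        assume "\<not> sqrt v < 1/2"
        hence "(1/2)^2 \<le> (sqrt v)^2" by (intro power_mono) auto
        hence "1/4 \<le> v" using v0 by (simp add: power2_eq_square)
        thus False using v8 by simp
      qed
      have sv0: "0 < sqrt v" using v0 by simp
      have x0: "0 < x" unfolding x_def using sv0 by simp
      have xl: "x < pi/2" unfolding x_def using sv pi_gt_zero by simp
      have xv: "(x/pi)^2 = v" unfolding x_def using v0 by simp
      have "c * x^(2*N+2) < F x" using H x0 xl by simp
      also have "F x = x^(2*N+2) * Psi N v" using Fx[of x] x0 xl xv by simp
      finally have "c < Psi N v" using xpos[of x] x0 by (simp add: mult.commute)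
      also have "Psi N v \<le> Psi N 0 + v * K" unfolding K_def by (rule Psi_le[OF N]) (use v0 v8 in auto)
      also have "\<dots> \<le> a + (c - a) / 2" using vK aP by simp
      finally have "c < a + (c - a) / 2" .
      thus False using ca by argo
    qed
  qed
  have P3: "\<forall>c::real. (\<forall>x::real. 0 < \<bar>x\<bar> \<and> \<bar>x\<bar> < pi / 2 \<longrightarrow> F x < c * x ^ (2*N+2)) \<longrightarrow> b \<le> c"
  proof (intro allI impI)
    fix c :: real
    assume H: "\<forall>x::real. 0 < \<bar>x\<bar> \<and> \<bar>x\<bar> < pi / 2 \<longrightarrow> F x < c * x ^ (2*N+2)"
    define Q where "Q x = F x / x^(2*N+2)" for x :: real
    have Feq: "F = (\<lambda>x. 2 * (x / sin x) + x * cos x / sin x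
             - (3 + (\<Sum>j=2..N. (2 ^ (2*j) - 4) * \<bar>bernoulli_num (2*j)\<bar> / fact (2*j) * x ^ (2*j))))"
      unfolding F_def by (rule ext) (simp add: tan_def)
    have ic: "isCont Q (pi/2)" unfolding Q_def Feq by (intro continuous_intros) auto
    hence lim: "(Q \<longlongrightarrow> Q (pi/2)) (at_left (pi/2))"
      by (simp add: isCont_def filterlim_at_split)
    have ev: "eventually (\<lambda>x. Q x \<le> c) (at_left (pi/2))"
      using eventually_at_left_real[of 0 "pi/2"]
    proof (rule eventually_mono)
      show "Q x \<le> c" if "x \<in> {0<..<pi/2}" for x
      proof -
        have x: "0 < \<bar>x\<bar> \<and> \<bar>x\<bar> < pi / 2" using that by auto
        have "F x < c * x^(2*N+2)" using H x by blast
        thus ?thesis unfolding Q_def using xpos[of x] x by (simp add: divide_le_eq)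
      qed
    qed simp
    have "Q (pi/2) \<le> c" by (rule tendsto_upperbound[OF lim ev]) simp
    moreover have "Q (pi/2) = b"
    proof -
      have F1: "F (pi/2) = (pi/2)^(2*N+2) * Psi N ((pi/2/pi)^2)" by (rule Fx) auto
      have hv: "(pi/2/pi)^2 = (1/4::real)" by (simp add: power2_eq_square)
      have F2: "F (pi/2) = (pi/2)^(2*N+2) * Psi N (1/4)" using F1 unfolding hv .
      show ?thesis unfolding Q_def bP F2 by simp
    qed
    ultimately show "b \<le> c" by simp
  qed
  show ?thesis using P1 P2 P3 by blast
qed

end
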